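(* Let $q$ be a prime power, let $n\le m$, and let $\alpha\in\mathbb{F}_{q^m}$ be a normal element, i.e. $\{\alpha^{[0]},\dots,\alpha^{[m-1]}\}$ is a basis of $\mathbb{F}_{q^m}$ over $\mathbb{F}_q$. Let $d\ge2$ and let $\mathcal{C}\subseteq\mathbb{F}_{q^m}^n$ be the Gabidulin code $\{c: \sum_{j=0}^{n-1}\alpha^{[i+j]}c_j=0,\ i=0,\dots,d-2\}$. Let $c\in\mathcal{C}$, let $e\in\mathbb{F}_{q^m}^n$ have rank $\tau\le(d-1)/2$, and let $r=c+e$. Write $e=\sum_{j=1}^{\tau}L_jV_j$ with $L_j\in\mathbb{F}_q^n$ and $V_j\in\mathbb{F}_{q^m}$, and set $X_j=L_j^Th$ where $h=(\alpha^{[0]},\dots,\alpha^{[n-1]})^T$. Define the syndromes $S_\ell=\sum_{i=0}^{n-1}\alpha^{[i+\ell]}r_i$ for $\ell=0,\dots,d-2$ and $\tilde S_\ell=S_{d-2-\ell}^{[\ell-d+2]}$ for $\ell=0,\dots,d-2$. Let $\Gamma(x)=\sum_{i=0}^{\tau}\Gamma_ix^{[i]}$ be the minimal $q$-polynomial of $\{V_1,\dots,V_\tau\}$ and $\Lambda(x)=\sum_{i=0}^{\tau}\Lambda_ix^{[i]}$ the minimal $q$-polynomial of $\{X_1,\dots,X_\tau\}$. Extend $e$ to length $m$ by $e_n=\dots=e_{m-1}=0$, let $E(x)=\sum_{j=0}^{m-1}E_jx^{[j]}$ with $E_j=\sum_{i=0}^{m-1}e_i\alpha^{[i+j]}$ be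 its $q$-transform with respect to $\alpha$, and let $\bar E(x)$ be the full $q$-reverse of $E(x)$. Then $$\Gamma(x)\otimes E(x)\equiv0 \pmod{x^{[m]}-x},\qquad \Lambda(x)\otimes\bar E(x)\equiv0 \pmod{x^{[m]}-x}.$$ In particular, $\sum_{i=0}^{\tau}\Gamma_iS_{\ell-i}^{[i]}=0$ and $\sum_{i=0}^{\tau}\Lambda_i\tilde S_{\ell-i}^{[i]}=0$ for $\ell=\tau,\dots,d-2$.
   Context: $x^{[i]}$ denotes $x^{q^i}$ (negative $i$ interpreted modulo $m$, i.e. $a^{[i]}=a^{q^{i\bmod m}}$ for $a\in\mathbb{F}_{q^m}$). The rank of $v\in\mathbb{F}_{q^m}^n$ is the rank over $\mathbb{F}_q$ of the $n\times m$ matrix whose $i$th row is the coordinate vector of $v_i$ in a fixed $\mathbb{F}_q$-basis of $\mathbb{F}_{q^m}$. A $q$-polynomial over $\mathbb{F}_{q^m}$ is $\sum_if_ix^{[i]}$ with $f_i\in\mathbb{F}_{q^m}$; its $q$-degree is the largest $i$ with $f_i\ne0$. The minimal $q$-polynomial of a set $\mathcal{S}\subseteq\mathbb{F}_{q^m}$ is the unique $q$-polynomial $M(x)=\sum_{i=0}^tM_ix^{[i]}$ with $M_0=1$ and least $q$-degree $t$ whose roots include $\mathcal{S}$. Symbolic multiplication is composition $f(x)\otimes g(x)=f(g(x))$, and reduction modulo $x^{[m]}-x$ is the remainder upon division by $x^{q^m}-x$. Coefficients of length-$m$ sequences are indexed cyclically ($f_i=f_{i\bmod m}$), and the full $q$-reverse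 of $f(x)=\sum_{i=0}^{m-1}f_ix^{[i]}$ is $\bar f(x)=\sum_{i=0}^{m-1}f_{-i}^{[i]}x^{[i]}$. *)

theory Defs
  imports "HOL-Computational_Algebra.Polynomial" "HOL-Computational_Algebra.Primes"
begin

definition Fq :: "nat \<Rightarrow> 'a::field set" where
  "Fq q = {x. x ^ q = x}"

text \<open>x^[k] for a possibly negative integer k, interpreted modulo m.\<close>
definition frobz :: "nat \<Rightarrow> nat \<Rightarrow> 'a::field \<Rightarrow> int \<Rightarrow> 'a" where
  "frobz q m a k = a ^ (q ^ nat (k mod int m))"

definition Fq_indep :: "nat \<Rightarrow> 'b set \<Rightarrow> ('b \<Rightarrow> 'a::field) \<Rightarrow> bool" where
  "Fq_indep q I w \<longleftrightarrow>
     (\<forall>c. (\<forall>i\<in>I. c i \<in> Fq q) \<longrightarrow> (\<Sum>i\<in>I. c i * w i) = 0 \<longrightarrow> (\<forall>i\<in>I. c i = 0))"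

definition Fq_spans :: "nat \<Rightarrow> 'b set \<Rightarrow> ('b \<Rightarrow> 'a::field) \<Rightarrow> bool" where
  "Fq_spans q I w \<longleftrightarrow>
     (\<forall>x. \<exists>c. (\<forall>i\<in>I. c i \<in> Fq q) \<and> x = (\<Sum>i\<in>I. c i * w i))"

definition normal_elem :: "nat \<Rightarrow> nat \<Rightarrow> 'a::field \<Rightarrow> bool" where
  "normal_elem q m \<alpha> \<longleftrightarrow>
     Fq_indep q {..<m} (\<lambda>i. \<alpha> ^ (q ^ i)) \<and> Fq_spans q {..<m} (\<lambda>i. \<alpha> ^ (q ^ i))"

text \<open>Rank over F_q of a length-n vector v (entries v 0, ..., v (n-1)): the rank of
  the n x m coordinate matrix, i.e. its row rank = the maximal number of
  F_q-linearly independent entries.\<close>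
definition rank_q :: "nat \<Rightarrow> nat \<Rightarrow> (nat \<Rightarrow> 'a::field) \<Rightarrow> nat" where
  "rank_q q n v = Max {card I | I. I \<subseteq> {..<n} \<and> Fq_indep q I v}"

text \<open>q-polynomials sum_i f_i x^[i] are represented by their coefficient sequences
  with finite support.\<close>
definition is_qpoly :: "(nat \<Rightarrow> 'a::zero) \<Rightarrow> bool" where
  "is_qpoly f \<longleftrightarrow> finite {i. f i \<noteq> 0}"

definition qdeg :: "(nat \<Rightarrow> 'a::zero) \<Rightarrow> nat" where
  "qdeg f = Max {i. f i \<noteq> 0}"

definition qeval :: "nat \<Rightarrow> (nat \<Rightarrow> 'a::field) \<Rightarrow> 'a \<Rightarrow> 'a" where
  "qeval q f x = (\<Sum>i\<in>{i. f i \<noteq> 0}. f i * x ^ (q ^ i))"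

definition qpoly_poly :: "nat \<Rightarrow> (nat \<Rightarrow> 'a::field) \<Rightarrow> 'a poly" where
  "qpoly_poly q f = (\<Sum>i\<in>{i. f i \<noteq> 0}. monom (f i) (q ^ i))"

definition is_min_qpoly :: "nat \<Rightarrow> 'a::field set \<Rightarrow> (nat \<Rightarrow> 'a) \<Rightarrow> bool" where
  "is_min_qpoly q S M \<longleftrightarrow>
     is_qpoly M \<and> M 0 = 1 \<and> (\<forall>s\<in>S. qeval q M s = 0) \<and>
     (\<forall>f. is_qpoly f \<and> f 0 = 1 \<and> (\<forall>s\<in>S. qeval q f s = 0) \<longrightarrow> qdeg M \<le> qdeg f)"

text \<open>Symbolic product f \<otimes> g = f(g(x)) is congruent to 0 modulo x^[m] - x.\<close>
definition qcomp_zero_mod :: "nat \<Rightarrow> nat \<Rightarrow> (nat \<Rightarrow> 'a::field) \<Rightarrow> (nat \<Rightarrow> 'a) \<Rightarrow> bool" where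
  "qcomp_zero_mod q m f g \<longleftrightarrow>
     (monom 1 (q ^ m) - monom 1 1) dvd pcompose (qpoly_poly q f) (qpoly_poly q g)"

definition qreverse :: "nat \<Rightarrow> nat \<Rightarrow> (nat \<Rightarrow> 'a::field) \<Rightarrow> nat \<Rightarrow> 'a" where
  "qreverse q m f i = (if i < m then f ((m - i) mod m) ^ (q ^ i) else 0)"

end

theory Submission
  imports Defs
begin


lemma card_pow_same:
  fixes x :: "'a::{finite,field}"
  shows "x ^ card (UNIV :: 'a set) = x"
proof (cases "x = 0")
  case False
  have "x * (\<Prod>y\<in>UNIV-{0}. x * y) = x * x ^ (card (UNIV :: 'a set) - 1) * \<Prod>(UNIV-{0})"
    by (simp add: prod.distrib mult_ac)
  also have "x * x ^ (card (UNIV :: 'a set) - 1) = x ^ Suc (card (UNIV :: 'a set) - 1)"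
    by (subst power_Suc) auto
  also have "Suc (card (UNIV :: 'a set) - 1) = card (UNIV :: 'a set)"
    using finite_UNIV_card_ge_0[where ?'a = 'a] by simp
  also have "(\<Prod>y\<in>UNIV-{0}. x * y) = (\<Prod>y\<in>UNIV-{0}. y)"
    by (rule prod.reindex_bij_witness[of _ "\<lambda>y. y / x" "\<lambda>y. x * y"]) (use False in auto)
  finally show ?thesis
    by simp
qed (use finite_UNIV_card_ge_0[where ?'a = 'a] in auto)

lemma char_eq:
  assumes "prime p" "card (UNIV::'a::{finite,field} set) = p ^ N"
  shows "CHAR('a) = p"
proof -
  have cp: "prime CHAR('a)"
    by (rule prime_CHAR_semidom) (rule finite_imp_CHAR_pos, simp)
  have "(\<Sum>y\<in>(UNIV::'a set). 1 + y) = (\<Sum>y\<in>UNIV. y)"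
    by (rule sum.reindex_bij_witness[of _ "\<lambda>y. y - 1" "\<lambda>y. 1 + y"]) auto
  then have "of_nat (card (UNIV::'a set)) = (0::'a)"
    by (simp add: sum.distrib)
  then have "CHAR('a) dvd p ^ N" using assms(2) of_nat_eq_0_iff_char_dvd by metis
  then have "CHAR('a) dvd p" using cp prime_dvd_power by blast
  then show ?thesis using cp assms(1) primes_dvd_imp_eq by blast
qed


lemma nat_mod_from_int: "int a mod int m = int b mod int m \<Longrightarrow> a mod m = b mod m"
  by (metis of_nat_eq_iff zmod_int)

lemma modfacts:
  assumes "i \<le> l" "l + 2 \<le> d" "m \<ge> 1"
  shows "(nat((int(l-i) - int d + 2) mod int m) + i) mod m = nat((int l - int d + 2) mod int m) mod m"
    and "(d - 2 - (l - i) + nat((int(l-i) - int d + 2) mod int m) + i) mod m = i mod m"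
proof -
  have m0: "int m > 0" using assms by simp
  have A: "int (nat ((x::int) mod int m)) = x mod int m" for x using m0 by simp
  define X where "X = int(l-i) - int d + 2"
  define Y where "Y = int l - int d + 2"
  have "int (nat(X mod int m) + i) mod int m = (X mod int m + int i) mod int m" using A by simp
  also have "\<dots> = (X + int i) mod int m" by (rule mod_add_left_eq)
  also have "X + int i = Y" using assms(1) by (simp add: X_def Y_def of_nat_diff)
  also have "Y mod int m = int (nat (Y mod int m)) mod int m" using A by simp
  finally show "(nat((int(l-i) - int d + 2) mod int m) + i) mod m = nat((int l - int d + 2) mod int m) mod m"
    unfolding X_def Y_def by (rule nat_mod_from_int)
  have "int (d - 2 - (l - i) + nat(X mod int m) + i) mod int m
      = (int (d - 2 - (l - i)) + X mod int m + int i) mod int m" using A by simp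
  also have "\<dots> = (X mod int m + (int (d - 2 - (l - i)) + int i)) mod int m" by (simp add: algebra_simps)
  also have "\<dots> = (X + (int (d - 2 - (l - i)) + int i)) mod int m" by (rule mod_add_left_eq)
  also have "X + (int (d - 2 - (l - i)) + int i) = int i" using assms(1,2) by (simp add: X_def of_nat_diff)
  finally show "(d - 2 - (l - i) + nat((int(l-i) - int d + 2) mod int m) + i) mod m = i mod m"
    unfolding X_def by (rule nat_mod_from_int)
qed


context
  fixes q m :: nat
  assumes FS: "\<And>(f::nat \<Rightarrow> 'a::{finite,field}) A j. sum f A ^ (q^j) = (\<Sum>i\<in>A. f i ^ (q^j))"
    and PER: "\<And>x::'a. x ^ (q^m) = x"
    and q1: "q \<ge> 2" and m1: "m \<ge> 1"
    and CARD: "card (UNIV::'a set) = q^m"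
begin

lemma Fq_pow: "(c::'a) \<in> Fq q \<Longrightarrow> c ^ (q^j) = c"
proof (induction j)
  case (Suc j)
  have "c ^ (q ^ Suc j) = (c ^ q) ^ (q ^ j)" by (simp add: power_mult)
  also have "c ^ q = c" using Suc.prems by (simp add: Fq_def)
  finally show ?case using Suc by simp
qed simp

lemma pow_pow: "((x::'a)^(q^i))^(q^j) = x^(q^(i+j))"
  by (simp add: power_mult[symmetric] power_add)

lemma per_mul: "(x::'a)^(q^(m*a)) = x"
proof (induction a)
  case (Suc a)
  have "x^(q^(m*Suc a)) = (x^(q^m))^(q^(m*a))" by (simp add: pow_pow)
  then show ?case using Suc PER by simp
qed simp

lemma per_mod: "(x::'a)^(q^i) = x^(q^(i mod m))"
proof -
  have "x^(q^i) = (x^(q^(m*(i div m))))^(q^(i mod m))"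
    by (simp add: pow_pow)
  then show ?thesis by (simp add: per_mul)
qed

lemma per_cong: "i mod m = j mod m \<Longrightarrow> (x::'a)^(q^i) = x^(q^j)"
  by (metis per_mod)

lemma qeval_superset: "finite A \<Longrightarrow> {i. f i \<noteq> 0} \<subseteq> A \<Longrightarrow>
   qeval q f (x::'a) = (\<Sum>i\<in>A. f i * x^(q^i))"
  unfolding qeval_def by (rule sum.mono_neutral_left) auto

lemma qeval_lin:
  fixes K :: "nat set"
  assumes "is_qpoly f" "\<forall>k\<in>K. t k \<in> Fq q"
  shows "qeval q f (\<Sum>k\<in>K. t k * w k) = (\<Sum>k\<in>K. t k * qeval q (f::nat\<Rightarrow>'a) (w k))"
proof -
  have "qeval q f (\<Sum>k\<in>K. t k * w k) = (\<Sum>i\<in>{i. f i \<noteq> 0}. f i * (\<Sum>k\<in>K. t k * w k ^ (q^i)))"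
    unfolding qeval_def
    using assms(2) by (intro sum.cong refl) (simp add: FS power_mult_distrib Fq_pow)
  also have "\<dots> = (\<Sum>k\<in>K. t k * qeval q f (w k))"
    unfolding qeval_def sum_distrib_left
    by (subst sum.swap) (simp add: mult_ac)
  finally show ?thesis .
qed

lemma trace_Fq: "(\<Sum>j<m. (y::'a)^(q^j)) \<in> Fq q"
proof -
  have "(\<Sum>j<m. y^(q^j)) ^ q = (\<Sum>j<m. y^(q^j)) ^ (q^1)" by simp
  also have "\<dots> = (\<Sum>j<m. y^(q^(Suc j)))" by (simp only: FS pow_pow) simp
  also have "\<dots> = (\<Sum>j<m. y^(q^j))"
  proof -
    have "(\<Sum>j<Suc m. y^(q^j)) = y^(q^0) + (\<Sum>j<m. y^(q^(Suc j)))"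
      by (rule sum.lessThan_Suc_shift)
    moreover have "(\<Sum>j<Suc m. y^(q^j)) = (\<Sum>j<m. y^(q^j)) + y^(q^m)" by simp
    ultimately show ?thesis using PER[of y] by simp
  qed
  finally show ?thesis by (simp add: Fq_def)
qed

lemma poly_qpoly: "poly (qpoly_poly q f) (x::'a) = qeval q f x"
  unfolding qpoly_poly_def qeval_def by (simp add: poly_sum poly_monom)

lemma vanish_dvd:
  assumes "\<forall>x. poly p (x::'a) = 0"
  shows "(monom 1 (q^m) - monom 1 1) dvd p"
proof -
  define D :: "'a poly" where "D = monom 1 (q^m) - monom 1 1"
  have Q2: "q^m \<ge> 2" using q1 m1
  proof -
    have "q^1 \<le> q^m" by (rule power_increasing) (use q1 m1 in auto)
    then show ?thesis using q1 by simp
  qed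
  have cD: "coeff D (q^m) = 1" using Q2 by (simp add: D_def coeff_monom)
  then have D0: "D \<noteq> 0" by auto
  have dD: "degree D \<le> q^m" unfolding D_def
    using Q2 by (intro degree_diff_le) (auto intro: order.trans[OF degree_monom_le])
  have pD: "poly D x = 0" for x using PER[of x] by (simp add: D_def poly_monom)
  define r where "r = p mod D"
  have "p = D * (p div D) + r" by (simp add: r_def)
  then have pr: "poly r x = 0" for x using assms pD
    by (metis (no_types) add_0 mult_zero_left poly_add poly_mult)
  have "r = 0"
  proof (rule ccontr)
    assume rn: "r \<noteq> 0"
    have "degree r < degree D" using degree_mod_less'[OF D0] r_def rn by simp
    hence "degree r < q^m" using dD by simp
    moreover have "card {x. poly r x = 0} \<le> degree r" by (rule card_poly_roots_bound) fact
    moreover have "{x. poly r x = 0} = UNIV" using pr by auto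
    ultimately show False using CARD by simp
  qed
  thus ?thesis by (simp add: D_def r_def dvd_eq_mod_eq_0)
qed

lemma qeval_step:
  fixes c :: 'a
  assumes sup: "\<forall>i>N. f i = (0::'a)"
  defines "g \<equiv> (\<lambda>i. ((if i = 0 then 0 else f (i - 1) ^ q) - c * f i) / (- c))"
  shows "qeval q g x = (qeval q f x ^ q - c * qeval q f x) / (- c)"
    and "\<forall>i>Suc N. g i = 0"
proof -
  have fs: "{i. f i \<noteq> 0} \<subseteq> {..N}" using sup by (auto simp: not_less[symmetric])
  have gs: "{i. g i \<noteq> 0} \<subseteq> {..Suc N}" using sup q1 by (auto simp: g_def not_less[symmetric])
  have e1: "qeval q f x = (\<Sum>i\<le>N. f i * x^(q^i))" by (rule qeval_superset) (use fs in auto)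
  have e2: "qeval q f x = (\<Sum>i\<le>Suc N. f i * x^(q^i))" by (rule qeval_superset) (use fs in auto)
  have "(\<Sum>i\<le>Suc N. (if i = 0 then 0 else f (i - 1) ^ q) * x^(q^i))
        = (\<Sum>i\<le>N. f i ^ q * x^(q^(Suc i)))"
    by (subst sum.atMost_Suc_shift) simp
  also have "\<dots> = (\<Sum>i\<le>N. f i * x^(q^i)) ^ (q^1)"
    by (simp only: FS power_mult_distrib pow_pow) simp
  finally have e3: "(\<Sum>i\<le>Suc N. (if i = 0 then 0 else f (i - 1) ^ q) * x^(q^i)) = qeval q f x ^ q"
    using e1 by simp
  have "qeval q g x = (\<Sum>i\<le>Suc N. g i * x^(q^i))" by (rule qeval_superset) (use gs in auto)
  also have "\<dots> = ((\<Sum>i\<le>Suc N. (if i = 0 then 0 else f (i - 1) ^ q) * x^(q^i))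
                    - c * (\<Sum>i\<le>Suc N. f i * x^(q^i))) / (- c)"
  proof -
    have "(\<Sum>i\<le>Suc N. g i * x^(q^i)) = (\<Sum>i\<le>Suc N. ((if i = 0 then 0 else f (i - 1) ^ q) * x^(q^i)
       - c * (f i * x^(q^i))) * inverse (- c))"
      by (rule sum.cong) (simp_all add: g_def divide_inverse algebra_simps)
    also have "\<dots> = ((\<Sum>i\<le>Suc N. (if i = 0 then 0 else f (i - 1) ^ q) * x^(q^i))
                    - c * (\<Sum>i\<le>Suc N. f i * x^(q^i))) * inverse (- c)"
      by (simp only: sum_distrib_right[symmetric] sum_subtractf sum_distrib_left)
    finally show ?thesis by (simp only: divide_inverse)
  qed
  finally show "qeval q g x = (qeval q f x ^ q - c * qeval q f x) / (- c)"
    using e2 e3 by simp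
  show "\<forall>i>Suc N. g i = 0" using sup q1 by (auto simp: g_def)
qed

lemma exists_qpoly:
  "\<exists>f. is_qpoly f \<and> f 0 = 1 \<and> (\<forall>v\<in>set vs. qeval q f v = (0::'a)) \<and> (\<forall>i>length vs. f i = 0)"
proof (induction vs)
  case Nil
  show ?case
    by (rule exI[of _ "\<lambda>i. if i = 0 then 1 else 0"]) (auto simp: is_qpoly_def)
next
  case (Cons v vs)
  then obtain f where f: "is_qpoly f" "f 0 = 1" "\<forall>v\<in>set vs. qeval q f v = (0::'a)"
    "\<forall>i>length vs. f i = 0" by blast
  show ?case
  proof (cases "qeval q f v = 0")
    case True
    then show ?thesis using f by (intro exI[of _ f]) auto
  next
    case False
    define y where "y = qeval q f v"
    define c where "c = y ^ (q - 1)"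
    have c0: "c \<noteq> 0" using False by (simp add: c_def y_def)
    define g where "g \<equiv> (\<lambda>i. ((if i = 0 then 0 else f (i - 1) ^ q) - c * f i) / (- c))"
    have st1: "qeval q g x = (qeval q f x ^ q - c * qeval q f x) / (- c)" for x
      unfolding g_def by (rule qeval_step(1)[OF f(4)])
    have st2: "\<forall>i>Suc (length vs). g i = 0"
      unfolding g_def by (rule qeval_step(2)[OF f(4)])
    note st = st1 st2
    have "is_qpoly g" unfolding is_qpoly_def
      by (rule finite_subset[of _ "{..Suc (length vs)}"]) (use st(2) in \<open>auto simp: not_less[symmetric]\<close>)
    moreover have "g 0 = 1" using c0 f(2) by (simp add: g_def)
    moreover have "\<forall>w\<in>set (v # vs). qeval q g w = 0"
    proof
      fix w assume "w \<in> set (v # vs)"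
      then consider "w = v" | "w \<in> set vs" by auto
      then show "qeval q g w = 0"
      proof cases
        case 1
        have "y ^ q = c * y" unfolding c_def using q1
          by (metis One_nat_def Suc_diff_1 less_le_trans mult.commute not_less_eq_eq numeral_2_eq_2 power_Suc2 zero_less_Suc)
        then show ?thesis using 1 st(1) by (simp add: y_def)
      next
        case 2
        then show ?thesis using st(1) f(3) q1 by simp
      qed
    qed
    moreover have "\<forall>i>length (v # vs). g i = 0" using st(2) by simp
    ultimately show ?thesis by blast
  qed
qed

lemma min_support:
  assumes "is_min_qpoly q (W ` {1..t}) M"
  shows "\<forall>i>t. M i = (0::'a)"
proof -
  obtain f where f: "is_qpoly f" "f 0 = 1" "\<forall>v\<in>set (map W [1..<Suc t]). qeval q f v = (0::'a)"
    "\<forall>i>length (map W [1..<Suc t]). f i = 0"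
    using exists_qpoly by blast
  have "\<forall>s\<in>W ` {1..t}. qeval q f s = 0" using f(3) by auto
  then have le: "qdeg M \<le> qdeg f" using assms f(1,2) unfolding is_min_qpoly_def by blast
  have f4: "\<forall>i>t. f i = 0" using f(4) by simp
  have "qdeg f \<le> t" unfolding qdeg_def
  proof (rule Max.boundedI)
    show "finite {i. f i \<noteq> 0}" using f(1) by (simp add: is_qpoly_def)
    show "{i. f i \<noteq> 0} \<noteq> {}" using f(2) by (metis (mono_tags) empty_iff mem_Collect_eq one_neq_zero)
    show "a \<le> t" if "a \<in> {i. f i \<noteq> 0}" for a using f4 that by (meson mem_Collect_eq not_le)
  qed
  moreover have "finite {i. M i \<noteq> 0}" using assms by (simp add: is_min_qpoly_def is_qpoly_def)
  ultimately show ?thesis using le unfolding qdeg_def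
    by (metis (mono_tags, lifting) Max_ge le_trans mem_Collect_eq not_le)
qed

lemma main:
  fixes n d \<tau> :: nat
    and \<alpha> :: "'a"
    and c e :: "nat \<Rightarrow> 'a"
    and L :: "nat \<Rightarrow> nat \<Rightarrow> 'a" and V :: "nat \<Rightarrow> 'a"
    and \<Gamma> \<Lambda> :: "nat \<Rightarrow> 'a"
  assumes nm: "n \<le> m"
    and d2: "d \<ge> 2"
    and c_code: "\<forall>i\<le>d - 2. (\<Sum>j<n. \<alpha> ^ (q ^ (i + j)) * c j) = 0"
    and L_Fq: "\<forall>j\<in>{1..\<tau>}. \<forall>i<n. L j i \<in> Fq q"
    and e_decomp: "\<forall>i<n. e i = (\<Sum>j=1..\<tau>. L j i * V j)"
    and Gamma_min: "is_min_qpoly q (V ` {1..\<tau>}) \<Gamma>"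
    and Lambda_min: "is_min_qpoly q ((\<lambda>j. \<Sum>i<n. L j i * \<alpha> ^ (q ^ i)) ` {1..\<tau>}) \<Lambda>"
    and r_def: "r = (\<lambda>i. c i + e i)"
    and S_def: "S = (\<lambda>l. \<Sum>i<n. \<alpha> ^ (q ^ (i + l)) * r i)"
    and St_def: "St = (\<lambda>l. frobz q m (S (d - 2 - l)) (int l - int d + 2))"
    and ee_def: "ee = (\<lambda>i. if i < n then e i else 0)"
    and E_def: "E = (\<lambda>j. if j < m then (\<Sum>i<m. ee i * \<alpha> ^ (q ^ (i + j))) else 0)"
  shows "qcomp_zero_mod q m \<Gamma> E \<and> qcomp_zero_mod q m \<Lambda> (qreverse q m E) \<and>
        (\<forall>l\<in>{\<tau>..d - 2}. (\<Sum>i=0..\<tau>. \<Gamma> i * S (l - i) ^ (q ^ i)) = 0) \<and>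
        (\<forall>l\<in>{\<tau>..d - 2}. (\<Sum>i=0..\<tau>. \<Lambda> i * St (l - i) ^ (q ^ i)) = 0)"
proof -
  define X where "X k = (\<Sum>i<n. L k i * \<alpha> ^ (q ^ i))" for k
  have Xeq: "(\<lambda>j. \<Sum>i<n. L j i * \<alpha> ^ (q ^ i)) = X" by (simp add: X_def fun_eq_iff)
  have K: "(\<Sum>i<n. L k i * \<alpha> ^ (q ^ (i + j))) = X k ^ (q ^ j)" if "k \<in> {1..\<tau>}" for k j
    unfolding X_def using L_Fq that
    by (simp add: FS power_mult_distrib Fq_pow pow_pow)
  have Se: "(\<Sum>i<n. \<alpha> ^ (q ^ (i + l)) * e i) = (\<Sum>k=1..\<tau>. V k * X k ^ (q ^ l))" for l
  proof -
    have "(\<Sum>i<n. \<alpha> ^ (q ^ (i + l)) * e i) = (\<Sum>i<n. \<Sum>k=1..\<tau>. V k * (L k i * \<alpha> ^ (q ^ (i + l))))"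
      by (rule sum.cong) (simp_all add: e_decomp sum_distrib_left mult_ac)
    also have "\<dots> = (\<Sum>k=1..\<tau>. V k * (\<Sum>i<n. L k i * \<alpha> ^ (q ^ (i + l))))"
      by (subst sum.swap) (simp add: sum_distrib_left)
    also have "\<dots> = (\<Sum>k=1..\<tau>. V k * X k ^ (q ^ l))"
      by (rule sum.cong) (simp_all add: K)
    finally show ?thesis .
  qed
  have SS: "S l = (\<Sum>k=1..\<tau>. V k * X k ^ (q ^ l))" if "l \<le> d - 2" for l
  proof -
    have "S l = (\<Sum>i<n. \<alpha> ^ (q ^ (i + l)) * c i) + (\<Sum>i<n. \<alpha> ^ (q ^ (i + l)) * e i)"
      by (simp add: S_def r_def distrib_left sum.distrib)
    moreover have "(\<Sum>i<n. \<alpha> ^ (q ^ (i + l)) * c i) = 0"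
    proof -
      have "(\<Sum>j<n. \<alpha> ^ (q ^ (l + j)) * c j) = 0" using c_code that by blast
      thus ?thesis by (simp add: add.commute)
    qed
    ultimately show ?thesis using Se by simp
  qed
  have Gsup: "\<forall>i>\<tau>. \<Gamma> i = 0" by (rule min_support[OF Gamma_min])
  have Lsup: "\<forall>i>\<tau>. \<Lambda> i = 0" by (rule min_support[OF Lambda_min])
  have Gq: "is_qpoly \<Gamma>" and Lq: "is_qpoly \<Lambda>" using Gamma_min Lambda_min by (auto simp: is_min_qpoly_def)
  have GV0: "qeval q \<Gamma> (V k) = 0" if "k \<in> {1..\<tau>}" for k
    using Gamma_min that by (auto simp: is_min_qpoly_def)
  have LX0: "qeval q \<Lambda> (X k) = 0" if "k \<in> {1..\<tau>}" for k
    using Lambda_min that unfolding Xeq by (auto simp: is_min_qpoly_def)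
  have GV: "(\<Sum>i=0..\<tau>. \<Gamma> i * y ^ (q ^ i)) = qeval q \<Gamma> y" for y
    by (rule qeval_superset[symmetric]) (use Gsup in \<open>auto simp: not_less[symmetric]\<close>)
  have LX: "(\<Sum>i=0..\<tau>. \<Lambda> i * y ^ (q ^ i)) = qeval q \<Lambda> y" for y
    by (rule qeval_superset[symmetric]) (use Lsup in \<open>auto simp: not_less[symmetric]\<close>)
  have C3: "\<forall>l\<in>{\<tau>..d - 2}. (\<Sum>i=0..\<tau>. \<Gamma> i * S (l - i) ^ (q ^ i)) = 0"
  proof
    fix l assume l: "l \<in> {\<tau>..d - 2}"
    have "(\<Sum>i=0..\<tau>. \<Gamma> i * S (l - i) ^ (q ^ i))
        = (\<Sum>i=0..\<tau>. \<Gamma> i * (\<Sum>k=1..\<tau>. X k ^ (q ^ l) * V k ^ (q ^ i)))"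
    proof (rule sum.cong)
      fix i assume i: "i \<in> {0..\<tau>}"
      have li: "l - i \<le> d - 2" using l by auto
      have "S (l - i) ^ (q ^ i) = (\<Sum>k=1..\<tau>. V k * X k ^ (q ^ (l - i))) ^ (q ^ i)"
        by (simp add: SS[OF li])
      also have "\<dots> = (\<Sum>k=1..\<tau>. X k ^ (q ^ l) * V k ^ (q ^ i))"
        using i l by (simp add: FS power_mult_distrib pow_pow mult.commute)
      finally show "\<Gamma> i * S (l - i) ^ (q ^ i) = \<Gamma> i * (\<Sum>k=1..\<tau>. X k ^ (q ^ l) * V k ^ (q ^ i))"
        by simp
    qed simp
    also have "\<dots> = (\<Sum>k=1..\<tau>. X k ^ (q ^ l) * (\<Sum>i=0..\<tau>. \<Gamma> i * V k ^ (q ^ i)))"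
      by (simp add: sum_distrib_left mult_ac sum.swap[of _ "{0..\<tau>}"])
    also have "\<dots> = 0" by (simp add: GV GV0)
    finally show "(\<Sum>i=0..\<tau>. \<Gamma> i * S (l - i) ^ (q ^ i)) = 0" .
  qed
  have C4: "\<forall>l\<in>{\<tau>..d - 2}. (\<Sum>i=0..\<tau>. \<Lambda> i * St (l - i) ^ (q ^ i)) = 0"
  proof
    fix l assume l: "l \<in> {\<tau>..d - 2}"
    define t where "t = nat((int l - int d + 2) mod int m)"
    have "(\<Sum>i=0..\<tau>. \<Lambda> i * St (l - i) ^ (q ^ i))
        = (\<Sum>i=0..\<tau>. \<Lambda> i * (\<Sum>k=1..\<tau>. V k ^ (q ^ t) * X k ^ (q ^ i)))"
    proof (rule sum.cong)
      fix i assume i: "i \<in> {0..\<tau>}"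
      have il: "i \<le> l" using i l by auto
      have l2: "l + 2 \<le> d" using l d2 by auto
      define s where "s = nat((int(l-i) - int d + 2) mod int m)"
      define a where "a = d - 2 - (l - i)"
      have a: "a \<le> d - 2" by (simp add: a_def)
      have "St (l - i) ^ (q ^ i) = (S a ^ (q ^ s)) ^ (q ^ i)"
        by (simp add: St_def frobz_def s_def a_def)
      also have "\<dots> = (\<Sum>k=1..\<tau>. V k * X k ^ (q ^ a)) ^ (q ^ (s + i))"
        by (simp add: SS[OF a] pow_pow)
      also have "\<dots> = (\<Sum>k=1..\<tau>. V k ^ (q ^ (s + i)) * X k ^ (q ^ (a + (s + i))))"
        by (simp add: FS power_mult_distrib pow_pow)
      also have "\<dots> = (\<Sum>k=1..\<tau>. V k ^ (q ^ t) * X k ^ (q ^ i))"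
      proof (rule sum.cong)
        fix k
        have "(s + i) mod m = t mod m" unfolding s_def t_def by (rule modfacts(1)[OF il l2 m1])
        then have "V k ^ (q ^ (s + i)) = V k ^ (q ^ t)" by (rule per_cong)
        moreover have "(a + (s + i)) mod m = i mod m"
          using modfacts(2)[OF il l2 m1] unfolding s_def a_def by (simp add: add.assoc)
        then have "X k ^ (q ^ (a + (s + i))) = X k ^ (q ^ i)" by (rule per_cong)
        ultimately show "V k ^ (q ^ (s + i)) * X k ^ (q ^ (a + (s + i))) = V k ^ (q ^ t) * X k ^ (q ^ i)"
          by simp
      qed simp
      finally show "\<Lambda> i * St (l - i) ^ (q ^ i) = \<Lambda> i * (\<Sum>k=1..\<tau>. V k ^ (q ^ t) * X k ^ (q ^ i))"
        by simp
    qed simp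
    also have "\<dots> = (\<Sum>k=1..\<tau>. V k ^ (q ^ t) * (\<Sum>i=0..\<tau>. \<Lambda> i * X k ^ (q ^ i)))"
      by (simp add: sum_distrib_left mult_ac sum.swap[of _ "{0..\<tau>}"])
    also have "\<dots> = 0" by (simp add: LX LX0)
    finally show "(\<Sum>i=0..\<tau>. \<Lambda> i * St (l - i) ^ (q ^ i)) = 0" .
  qed
  have Ej: "E j = (if j < m then (\<Sum>k=1..\<tau>. V k * X k ^ (q^j)) else 0)" for j
  proof (cases "j < m")
    case True
    have "(\<Sum>i<m. ee i * \<alpha> ^ (q ^ (i + j))) = (\<Sum>i<n. ee i * \<alpha> ^ (q ^ (i + j)))"
      by (rule sum.mono_neutral_right) (use nm in \<open>auto simp: ee_def\<close>)
    also have "\<dots> = (\<Sum>i<n. \<alpha> ^ (q ^ (i + j)) * e i)"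
      by (rule sum.cong) (simp_all add: ee_def mult.commute)
    finally show ?thesis using True Se by (simp add: E_def)
  qed (simp add: E_def)
  have EvalE: "qeval q E y = (\<Sum>k=1..\<tau>. (\<Sum>j<m. (X k * y)^(q^j)) * V k)" for y
  proof -
    have "qeval q E y = (\<Sum>j<m. E j * y^(q^j))"
      by (rule qeval_superset) (auto simp: E_def split: if_splits)
    also have "\<dots> = (\<Sum>j<m. \<Sum>k=1..\<tau>. V k * (X k * y) ^ (q^j))"
      by (rule sum.cong) (simp_all add: Ej sum_distrib_left sum_distrib_right power_mult_distrib mult_ac)
    also have "\<dots> = (\<Sum>k=1..\<tau>. (\<Sum>j<m. (X k * y)^(q^j)) * V k)"
      by (subst sum.swap) (simp add: sum_distrib_left mult_ac)
    finally show ?thesis .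
  qed
  have C1: "qcomp_zero_mod q m \<Gamma> E"
    unfolding qcomp_zero_mod_def
  proof (rule vanish_dvd, rule allI)
    fix y
    have "poly (pcompose (qpoly_poly q \<Gamma>) (qpoly_poly q E)) y = qeval q \<Gamma> (qeval q E y)"
      by (simp add: poly_pcompose poly_qpoly)
    also have "\<dots> = (\<Sum>k=1..\<tau>. (\<Sum>j<m. (X k * y)^(q^j)) * qeval q \<Gamma> (V k))"
      unfolding EvalE by (rule qeval_lin[OF Gq]) (simp add: trace_Fq)
    also have "\<dots> = 0" by (simp add: GV0)
    finally show "poly (pcompose (qpoly_poly q \<Gamma>) (qpoly_poly q E)) y = 0" .
  qed
  have Rj: "qreverse q m E i = (if i < m then (\<Sum>k=1..\<tau>. X k * V k ^ (q^i)) else 0)" for i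
  proof (cases "i < m")
    case True
    define a where "a = (m - i) mod m"
    have am: "a < m" using m1 by (simp add: a_def)
    have "qreverse q m E i = (\<Sum>k=1..\<tau>. V k * X k ^ (q ^ a)) ^ (q ^ i)"
      using True am by (simp add: qreverse_def Ej a_def)
    also have "\<dots> = (\<Sum>k=1..\<tau>. V k ^ (q ^ i) * X k ^ (q ^ (a + i)))"
      by (simp add: FS power_mult_distrib pow_pow)
    also have "\<dots> = (\<Sum>k=1..\<tau>. X k * V k ^ (q^i))"
    proof (rule sum.cong)
      fix k
      have "(a + i) mod m = 0 mod m" using True by (cases "i = 0") (auto simp: a_def)
      then have "X k ^ (q ^ (a + i)) = X k ^ (q ^ 0)" by (rule per_cong)
      then show "V k ^ (q ^ i) * X k ^ (q ^ (a + i)) = X k * V k ^ (q^i)" by simp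
    qed simp
    finally show ?thesis using True by simp
  qed (simp add: qreverse_def)
  have EvalR: "qeval q (qreverse q m E) y = (\<Sum>k=1..\<tau>. (\<Sum>j<m. (V k * y)^(q^j)) * X k)" for y
  proof -
    have "qeval q (qreverse q m E) y = (\<Sum>j<m. qreverse q m E j * y^(q^j))"
      by (rule qeval_superset) (auto simp: qreverse_def split: if_splits)
    also have "\<dots> = (\<Sum>j<m. \<Sum>k=1..\<tau>. X k * (V k * y) ^ (q^j))"
      by (rule sum.cong) (simp_all add: Rj sum_distrib_left sum_distrib_right power_mult_distrib mult_ac)
    also have "\<dots> = (\<Sum>k=1..\<tau>. (\<Sum>j<m. (V k * y)^(q^j)) * X k)"
      by (subst sum.swap) (simp add: sum_distrib_left mult_ac)
    finally show ?thesis .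
  qed
  have C2: "qcomp_zero_mod q m \<Lambda> (qreverse q m E)"
    unfolding qcomp_zero_mod_def
  proof (rule vanish_dvd, rule allI)
    fix y
    have "poly (pcompose (qpoly_poly q \<Lambda>) (qpoly_poly q (qreverse q m E))) y
          = qeval q \<Lambda> (qeval q (qreverse q m E) y)"
      by (simp add: poly_pcompose poly_qpoly)
    also have "\<dots> = (\<Sum>k=1..\<tau>. (\<Sum>j<m. (V k * y)^(q^j)) * qeval q \<Lambda> (X k))"
      unfolding EvalR by (rule qeval_lin[OF Lq]) (simp add: trace_Fq)
    also have "\<dots> = 0" by (simp add: LX0)
    finally show "poly (pcompose (qpoly_poly q \<Lambda>) (qpoly_poly q (qreverse q m E))) y = 0" .
  qed
  show ?thesis using C1 C2 C3 C4 by blast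
qed

end

theorem theorem2:
  fixes q m n d \<tau> :: nat
    and \<alpha> :: "'a::{finite,field}"
    and c e :: "nat \<Rightarrow> 'a"
    and L :: "nat \<Rightarrow> nat \<Rightarrow> 'a" and V :: "nat \<Rightarrow> 'a"
    and \<Gamma> \<Lambda> :: "nat \<Rightarrow> 'a"
  assumes q_pp: "\<exists>p k. prime p \<and> k > 0 \<and> q = p ^ k"
    and card: "card (UNIV :: 'a set) = q ^ m"
    and nm: "n \<le> m"
    and normal: "normal_elem q m \<alpha>"
    and d2: "d \<ge> 2"
    and c_code: "\<forall>i\<le>d - 2. (\<Sum>j<n. \<alpha> ^ (q ^ (i + j)) * c j) = 0"
    and e_rank: "rank_q q n e = \<tau>"
    and tau_le: "2 * \<tau> \<le> d - 1"
    and L_Fq: "\<forall>j\<in>{1..\<tau>}. \<forall>i<n. L j i \<in> Fq q"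
    and e_decomp: "\<forall>i<n. e i = (\<Sum>j=1..\<tau>. L j i * V j)"
    and Gamma_min: "is_min_qpoly q (V ` {1..\<tau>}) \<Gamma>"
    and Lambda_min: "is_min_qpoly q ((\<lambda>j. \<Sum>i<n. L j i * \<alpha> ^ (q ^ i)) ` {1..\<tau>}) \<Lambda>"
  shows
    "let r = (\<lambda>i. c i + e i);
         S = (\<lambda>l. \<Sum>i<n. \<alpha> ^ (q ^ (i + l)) * r i);
         St = (\<lambda>l. frobz q m (S (d - 2 - l)) (int l - int d + 2));
         ee = (\<lambda>i. if i < n then e i else 0);
         E = (\<lambda>j. if j < m then (\<Sum>i<m. ee i * \<alpha> ^ (q ^ (i + j))) else 0)
     in qcomp_zero_mod q m \<Gamma> E \<and> qcomp_zero_mod q m \<Lambda> (qreverse q m E) \<and>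
        (\<forall>l\<in>{\<tau>..d - 2}. (\<Sum>i=0..\<tau>. \<Gamma> i * S (l - i) ^ (q ^ i)) = 0) \<and>
        (\<forall>l\<in>{\<tau>..d - 2}. (\<Sum>i=0..\<tau>. \<Lambda> i * St (l - i) ^ (q ^ i)) = 0)"
proof -
  obtain p k where pk: "prime p" "k > 0" "q = p ^ k" using q_pp by blast
  have cardp: "card (UNIV :: 'a set) = p ^ (k * m)" using card pk(3) by (simp add: power_mult)
  have CH: "CHAR('a) = p" by (rule char_eq[OF pk(1) cardp])
  have FS: "\<And>(f::nat \<Rightarrow> 'a) A j. sum f A ^ (q^j) = (\<Sum>i\<in>A. f i ^ (q^j))"
  proof -
    fix f :: "nat \<Rightarrow> 'a" and A j
    show "sum f A ^ (q^j) = (\<Sum>i\<in>A. f i ^ (q^j))"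
      by (rule freshmans_dream_sum'[where n="k*j"]) (use CH pk in \<open>auto simp: power_mult\<close>)
  qed
  have PER: "\<And>x::'a. x ^ (q^m) = x" using card_pow_same card by metis
  have q1: "q \<ge> 2"
  proof -
    have "p \<ge> 2" using pk(1) prime_ge_2_nat by blast
    moreover have "p ^ 1 \<le> p ^ k" using pk(2) \<open>p \<ge> 2\<close> by (intro power_increasing) auto
    ultimately show ?thesis using pk(3) by simp
  qed
  have m1: "m \<ge> 1"
  proof (rule ccontr)
    assume "\<not> m \<ge> 1"
    then have "card (UNIV :: 'a set) = 1" using card by simp
    moreover have "card {0::'a, 1} \<le> card (UNIV :: 'a set)" by (rule card_mono) auto
    ultimately show False by simp
  qed
  show ?thesis unfolding Let_def
    by (rule main[OF FS PER q1 m1 card nm d2 c_code L_Fq e_decomp Gamma_min Lambda_min refl refl refl refl refl])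
qed

end
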